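(* Let $Q=\partial_\psi S$ and $R=\partial_\psi P_0$ be $\partial_\psi$-delta operators with $S,P_0\in\Sigma_\psi$ invertible, and let $(p_n)$ and $(r_n)$ be their respective $\partial_\psi$-basic polynomial sequences. Then for every $n>0$, $$p_n(x)=\hat x_\psi\,(P_0S^{-1})^n\,\hat x_\psi^{-1}\,r_n(x).$$
   Context: Let $F$ be a field of characteristic $0$, $P=F[x]$. Fix $(\psi_n)_{n\ge0}$ in $F$ with $\psi_0=1$, $\psi_n\ne0$, $\psi_{-1}=0$; $n_\psi=\psi_{n-1}/\psi_n$, $n_\psi!=1/\psi_n$, $0_\psi!=1$. $\partial_\psi x^n=n_\psi x^{n-1}$ (linear); $E^a(\partial_\psi)=\sum_k\frac{a^k}{k_\psi!}\partial_\psi^k$. $\Sigma_\psi$: algebra of linear operators on $P$ commuting with all $E^a(\partial_\psi)$. A $\partial_\psi$-delta operator is $Q\in\Sigma_\psi$ with $Q(x)$ a nonzero constant; its $\partial_\psi$-basic sequence: $\deg p_n=n$, $p_0=1$, $p_n(0)=0$ for $n>0$, $Qp_n=n_\psi p_{n-1}$. $\hat x_\psi x^n=\frac{n+1}{(n+1)_\psi}x^{n+1}$ (linear), and $\hat x_\psi^{-1}$ is its inverse on polynomials with zero constant term: $\hat x_\psi^{-1}x^n=\frac{n_\psi}{n}x^{n-1}$ for $n\ge1$. *)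

theory Defs
  imports "HOL-Computational_Algebra.Polynomial"
begin

text \<open>psi-integer n_psi = psi(n-1)/psi(n), with psi(-1) = 0, so 0_psi = 0.\<close>
definition psi_num :: "(nat \<Rightarrow> 'a::field) \<Rightarrow> nat \<Rightarrow> 'a" where
  "psi_num psi n = (if n = 0 then 0 else psi (n - 1) / psi n)"

definition psi_fact :: "(nat \<Rightarrow> 'a::field) \<Rightarrow> nat \<Rightarrow> 'a" where
  "psi_fact psi n = 1 / psi n"

definition admissible_psi :: "(nat \<Rightarrow> 'a::field) \<Rightarrow> bool" where
  "admissible_psi psi \<longleftrightarrow> psi 0 = 1 \<and> (\<forall>n. psi n \<noteq> 0)"

definition psi_deriv :: "(nat \<Rightarrow> 'a::field) \<Rightarrow> 'a poly \<Rightarrow> 'a poly" where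
  "psi_deriv psi p = (\<Sum>n\<le>degree p. smult (coeff p n * psi_num psi n) (monom 1 (n - 1)))"

text \<open>E^a(psi_deriv) = sum_k a^k / k_psi! psi_deriv^k (finite on each polynomial).\<close>
definition psi_shift :: "(nat \<Rightarrow> 'a::field) \<Rightarrow> 'a \<Rightarrow> 'a poly \<Rightarrow> 'a poly" where
  "psi_shift psi a p = (\<Sum>k\<le>degree p. smult (a ^ k / psi_fact psi k) ((psi_deriv psi ^^ k) p))"

definition lin_op :: "('a::field poly \<Rightarrow> 'a poly) \<Rightarrow> bool" where
  "lin_op T \<longleftrightarrow> (\<forall>p q. T (p + q) = T p + T q) \<and> (\<forall>c p. T (smult c p) = smult c (T p))"

definition Sigma_psi :: "(nat \<Rightarrow> 'a::field) \<Rightarrow> ('a poly \<Rightarrow> 'a poly) set" where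
  "Sigma_psi psi = {T. lin_op T \<and> (\<forall>a p. T (psi_shift psi a p) = psi_shift psi a (T p))}"

definition psi_delta :: "(nat \<Rightarrow> 'a::field) \<Rightarrow> ('a poly \<Rightarrow> 'a poly) \<Rightarrow> bool" where
  "psi_delta psi Q \<longleftrightarrow> Q \<in> Sigma_psi psi \<and> degree (Q [:0, 1:]) = 0 \<and> Q [:0, 1:] \<noteq> 0"

definition psi_basic_seq :: "(nat \<Rightarrow> 'a::field) \<Rightarrow> ('a poly \<Rightarrow> 'a poly) \<Rightarrow> (nat \<Rightarrow> 'a poly) \<Rightarrow> bool" where
  "psi_basic_seq psi Q p \<longleftrightarrow>
     (\<forall>n. degree (p n) = n) \<and> p 0 = 1 \<and> (\<forall>n>0. poly (p n) 0 = 0) \<and>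
     (\<forall>n. Q (p n) = smult (psi_num psi n) (p (n - 1)))"

definition psi_xhat :: "(nat \<Rightarrow> 'a::field_char_0) \<Rightarrow> 'a poly \<Rightarrow> 'a poly" where
  "psi_xhat psi p = (\<Sum>n\<le>degree p.
      smult (coeff p n * of_nat (n + 1) / psi_num psi (n + 1)) (monom 1 (n + 1)))"

text \<open>hat x_psi^{-1}: x^n \<mapsto> n_psi/n x^(n-1) for n \<ge> 1 (used on polys with zero constant term).\<close>
definition psi_xhat_inv :: "(nat \<Rightarrow> 'a::field_char_0) \<Rightarrow> 'a poly \<Rightarrow> 'a poly" where
  "psi_xhat_inv psi p = (\<Sum>n\<in>{1..degree p}.
      smult (coeff p n * psi_num psi n / of_nat n) (monom 1 (n - 1)))"

end

theory Submission
  imports Defs "HOL-Computational_Algebra.Formal_Power_Series"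
begin

unbundle fps_syntax

locale psi_ctx =
  fixes psi :: "nat \<Rightarrow> 'a::field_char_0"
  assumes adm: "admissible_psi psi"
begin

lemma psi0: "psi 0 = 1" and psinz: "psi n \<noteq> 0"
  using adm by (auto simp: admissible_psi_def)

definition beta :: "nat \<Rightarrow> 'a poly \<Rightarrow> 'a" where
  "beta k p = coeff p k / psi k"

lemma coeff_beta: "coeff p k = psi k * beta k p"
  using psinz[of k] by (simp add: beta_def)

lemma beta_ext: "(\<And>k. beta k p = beta k q) \<Longrightarrow> p = q"
  by (metis coeff_beta poly_eqI)

lemma beta_0: "k > degree p \<Longrightarrow> beta k p = 0"
  by (simp add: beta_def coeff_eq_0)

lemma beta_nz: "beta k p \<noteq> 0 \<Longrightarrow> k \<le> degree p"
  using beta_0 not_le by blast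

lemma beta_add[simp]: "beta k (p + q) = beta k p + beta k q"
  by (simp add: beta_def add_divide_distrib)
lemma beta_diff[simp]: "beta k (p - q) = beta k p - beta k q"
  by (simp add: beta_def diff_divide_distrib)
lemma beta_smult[simp]: "beta k (smult c p) = c * beta k p"
  by (simp add: beta_def)
lemma beta_zero[simp]: "beta k 0 = 0"
  by (simp add: beta_def)
lemma beta_one: "beta k 1 = (if k = 0 then 1 else 0)"
  by (simp add: beta_def psi0 coeff_1)
lemma beta_monom: "beta k (monom (psi n) n) = (if k = n then 1 else 0)"
  using psinz[of n] by (simp add: beta_def)

lemma coeff_deriv: "coeff (psi_deriv psi p) k = coeff p (k+1) * psi_num psi (k+1)"
proof -
  have "coeff (psi_deriv psi p) k =
     (\<Sum>n\<le>degree p. if n = k + 1 then coeff p n * psi_num psi n else 0)"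
    unfolding psi_deriv_def coeff_sum
    by (rule sum.cong) (auto simp: psi_num_def)
  also have "\<dots> = coeff p (k+1) * psi_num psi (k+1)"
    by (simp add: sum.delta' coeff_eq_0)
  finally show ?thesis .
qed

lemma beta_deriv[simp]: "beta k (psi_deriv psi p) = beta (k+1) p"
  using psinz[of k] psinz[of "k+1"]
  by (simp add: beta_def coeff_deriv psi_num_def)

lemma coeff_xhat: "coeff (psi_xhat psi p) k =
   (if k = 0 then 0 else coeff p (k-1) * of_nat k / psi_num psi k)"
proof -
  have "coeff (psi_xhat psi p) k =
     (\<Sum>n\<le>degree p. if n = k - 1 then (if k = 0 then 0 else coeff p n * of_nat k / psi_num psi k) else 0)"
    unfolding psi_xhat_def coeff_sum
    by (rule sum.cong) auto
  also have "\<dots> = (if k = 0 then 0 else coeff p (k-1) * of_nat k / psi_num psi k)"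
    by (simp add: sum.delta' coeff_eq_0)
  finally show ?thesis .
qed

lemma beta_xhat[simp]: "beta k (psi_xhat psi p) = of_nat k * beta (k-1) p"
  using psinz[of k] psinz[of "k-1"]
  by (cases k) (simp_all add: beta_def coeff_xhat psi_num_def field_simps)

lemma coeff_xhat_inv: "coeff (psi_xhat_inv psi p) k = coeff p (k+1) * psi_num psi (k+1) / of_nat (k+1)"
proof -
  have "coeff (psi_xhat_inv psi p) k =
     (\<Sum>n\<in>{1..degree p}. if n = k + 1 then coeff p n * psi_num psi n / of_nat n else 0)"
    unfolding psi_xhat_inv_def coeff_sum
    by (rule sum.cong) auto
  also have "\<dots> = coeff p (k+1) * psi_num psi (k+1) / of_nat (k+1)"
    by (simp add: sum.delta' coeff_eq_0)
  finally show ?thesis .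
qed

lemma beta_xhat_inv[simp]: "beta k (psi_xhat_inv psi p) = beta (k+1) p / of_nat (k+1)"
  using psinz[of k] psinz[of "k+1"] of_nat_neq_0[of k, where ?'a='a]
  by (simp add: beta_def coeff_xhat_inv psi_num_def divide_simps del: of_nat_Suc)

lemma beta_derivpow[simp]: "beta k ((psi_deriv psi ^^ j) p) = beta (k+j) p"
  by (induction j arbitrary: k) (simp_all add: ac_simps)

definition Op :: "'a fps \<Rightarrow> 'a poly \<Rightarrow> 'a poly" where
  "Op f p = (\<Sum>k\<le>degree p. monom (psi k * (\<Sum>j\<le>degree p. f $ j * beta (k+j) p)) k)"

lemma beta_Op_raw: "beta k (Op f p) = (\<Sum>j\<le>degree p. f $ j * beta (k+j) p)"
proof -
  have "coeff (Op f p) k = (\<Sum>m\<le>degree p. if m = k then psi k * (\<Sum>j\<le>degree p. f $ j * beta (k+j) p) else 0)"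
    unfolding Op_def coeff_sum by (rule sum.cong) auto
  also have "\<dots> = psi k * (\<Sum>j\<le>degree p. f $ j * beta (k+j) p)"
    by (auto simp: sum.delta' beta_0 intro!: sum.neutral)
  finally show ?thesis using psinz[of k] by (simp add: beta_def)
qed

lemma degree_Op: "degree (Op f p) \<le> degree p"
proof (rule degree_le, intro allI impI)
  fix i assume "degree p < i"
  then show "coeff (Op f p) i = 0"
    by (simp add: coeff_beta beta_Op_raw beta_0)
qed

lemma beta_Op: assumes "degree p \<le> N"
  shows "beta k (Op f p) = (\<Sum>j\<le>N. f $ j * beta (k+j) p)"
  unfolding beta_Op_raw
  by (rule sum.mono_neutral_left) (use assms in \<open>auto simp: beta_0\<close>)

lemma Op_add: "Op f (p + q) = Op f p + Op f q"
proof (rule beta_ext)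
  fix k
  let ?N = "max (degree p) (degree q)"
  have "degree (p + q) \<le> ?N" by (rule degree_add_le) auto
  then show "beta k (Op f (p + q)) = beta k (Op f p + Op f q)"
    by (simp add: beta_Op[of _ ?N] distrib_left sum.distrib)
qed

lemma Op_smult: "Op f (smult c p) = smult c (Op f p)"
proof (rule beta_ext)
  fix k
  have "degree (smult c p) \<le> degree p" by simp
  then show "beta k (Op f (smult c p)) = beta k (smult c (Op f p))"
    by (simp add: beta_Op[of _ "degree p"] sum_distrib_left ac_simps)
qed

lemma Op_diff: "Op f (p - q) = Op f p - Op f q"
  using Op_add[of f "p - q" q] by simp

lemma Op_hom: "Op f (Op g p) = Op (f * g) p"
proof (rule beta_ext)
  fix k
  define N where "N = degree p"
  have dN: "degree p \<le> N" "degree (Op g p) \<le> N" using degree_Op[of g p] by (auto simp: N_def)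
  have "beta k (Op f (Op g p)) = (\<Sum>i\<le>N. \<Sum>j\<le>N. f $ i * g $ j * beta (k+i+j) p)"
    by (simp add: beta_Op[OF dN(2)] beta_Op[OF dN(1)] sum_distrib_left ac_simps)
  also have "\<dots> = (\<Sum>(i,j)\<in>{..N} \<times> {..N}. f $ i * g $ j * beta (k+i+j) p)"
    by (rule sum.cartesian_product)
  also have "\<dots> = (\<Sum>(i,j)\<in>{(i,j). i + j \<le> N}. f $ i * g $ j * beta (k+i+j) p)"
    by (rule sum.mono_neutral_right) (auto simp: N_def dest!: beta_nz)
  also have "\<dots> = (\<Sum>m\<le>N. \<Sum>i\<le>m. f $ i * g $ (m-i) * beta (k+i+(m-i)) p)"
    by (rule sum.triangle_reindex_eq)
  also have "\<dots> = (\<Sum>m\<le>N. (f*g) $ m * beta (k+m) p)"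
    by (rule sum.cong) (auto simp: fps_mult_nth atLeast0AtMost sum_distrib_right intro!: sum.cong)
  also have "\<dots> = beta k (Op (f * g) p)"
    by (simp add: beta_Op[OF dN(1)])
  finally show "beta k (Op f (Op g p)) = beta k (Op (f * g) p)" .
qed

lemma Op_X: "Op fps_X p = psi_deriv psi p"
proof (rule beta_ext)
  fix k
  have d: "degree p \<le> Suc (degree p)" by simp
  have "(\<Sum>j\<le>Suc (degree p). fps_X $ j * beta (k+j) p) = (\<Sum>j\<le>Suc (degree p). if j = 1 then beta (k+1) p else 0)"
    by (rule sum.cong) (auto simp: fps_X_def)
  then show "beta k (Op fps_X p) = beta k (psi_deriv psi p)"
    by (simp add: beta_Op[OF d])
qed

lemma Op_1: "Op 1 p = p"
proof (rule beta_ext)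
  fix k
  have d: "degree p \<le> degree p" by simp
  have "(\<Sum>j\<le>degree p. (1::'a fps) $ j * beta (k+j) p) = (\<Sum>j\<le>degree p. if j = 0 then beta k p else 0)"
    by (rule sum.cong) (auto simp: fps_one_nth)
  then show "beta k (Op 1 p) = beta k p"
    by (simp add: beta_Op[OF d])
qed

lemma beta_Op_monom: "beta k (Op g (monom (psi n) n)) = (if k \<le> n then g $ (n-k) else 0)"
proof -
  have d: "degree (monom (psi n) n) \<le> n" by (simp add: degree_monom_le)
  have "beta k (Op g (monom (psi n) n)) = (\<Sum>j\<le>n. if j = n - k \<and> k \<le> n then g $ j else 0)"
    by (simp add: beta_Op[OF d] beta_monom) (rule sum.cong, auto)
  also have "\<dots> = (if k \<le> n then g $ (n-k) else 0)"
    by (auto simp: sum.delta' cong: conj_cong)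
  finally show ?thesis .
qed

lemma beta_Op_1: "beta k (Op g 1) = g $ 0 * beta k 1"
proof -
  have d: "degree (1::'a poly) \<le> 0" by simp
  show ?thesis by (simp add: beta_Op[OF d])
qed

lemma lin_zero: "lin_op T \<Longrightarrow> T 0 = 0"
  unfolding lin_op_def by (metis smult_0_left)


lemma lin_smult: "lin_op T \<Longrightarrow> T (smult c p) = smult c (T p)"
  unfolding lin_op_def by blast

lemma lin_add: "lin_op T \<Longrightarrow> T (p + q) = T p + T q"
  unfolding lin_op_def by blast

lemma lin_diff: assumes "lin_op T" shows "T (p - q) = T p - T q"
proof -
  have "T (p - q) + T q = T p" using lin_add[OF assms, of "p - q" q] by simp
  then show ?thesis by (simp add: eq_diff_eq)
qed

lemma lin_sum: assumes "lin_op T" "finite A" shows "T (\<Sum>i\<in>A. f i) = (\<Sum>i\<in>A. T (f i))"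
  using assms(2) by (induction A rule: finite_induct) (auto simp: lin_zero[OF assms(1)] lin_add[OF assms(1)])

lemma degree_derivpow: "degree ((psi_deriv psi ^^ k) p) \<le> degree p"
proof (rule degree_le, intro allI impI)
  fix i assume "degree p < i"
  then show "coeff ((psi_deriv psi ^^ k) p) i = 0"
    by (simp add: coeff_beta beta_0)
qed

lemma poly_N: fixes q :: "'a poly" assumes "degree q \<le> N" shows "poly q a = (\<Sum>k\<le>N. coeff q k * a ^ k)"
proof -
  have "poly q a = (\<Sum>k\<le>degree q. coeff q k * a ^ k)" by (rule poly_altdef)
  also have "\<dots> = (\<Sum>k\<le>N. coeff q k * a ^ k)"
    by (rule sum.mono_neutral_left) (use assms in \<open>auto simp: coeff_eq_0\<close>)
  finally show ?thesis .
qed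

lemma shift_eval: "poly (psi_shift psi a q) 0 = poly q a"
proof -
  have "poly (psi_shift psi a q) 0 = (\<Sum>k\<le>degree q. a ^ k / psi_fact psi k * coeff ((psi_deriv psi ^^ k) q) 0)"
    by (simp add: psi_shift_def poly_0_coeff_0 coeff_sum)
  also have "\<dots> = (\<Sum>k\<le>degree q. coeff q k * a ^ k)"
  proof (rule sum.cong)
    fix k
    have "coeff ((psi_deriv psi ^^ k) q) 0 = psi 0 * beta 0 ((psi_deriv psi ^^ k) q)"
      by (rule coeff_beta)
    also have "\<dots> = coeff q k / psi k" by (simp add: psi0) (simp add: beta_def)
    finally have "coeff ((psi_deriv psi ^^ k) q) 0 = coeff q k / psi k" .
    then show "a ^ k / psi_fact psi k * coeff ((psi_deriv psi ^^ k) q) 0 = coeff q k * a ^ k"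
      using psinz[of k] by (simp add: psi_fact_def)
  qed simp
  finally show ?thesis by (simp add: poly_altdef)
qed

definition fT :: "('a poly \<Rightarrow> 'a poly) \<Rightarrow> 'a fps" where
  "fT T = Abs_fps (\<lambda>j. psi j * poly (T (monom 1 j)) 0)"

lemma tval: assumes "lin_op T" "degree q \<le> N"
  shows "poly (T q) 0 = (\<Sum>m\<le>N. beta m q * fT T $ m)"
proof -
  have "T q = T (\<Sum>m\<le>degree q. smult (coeff q m) (monom 1 m))"
    by (simp add: smult_monom poly_as_sum_of_monoms)
  also have "\<dots> = (\<Sum>m\<le>degree q. smult (coeff q m) (T (monom 1 m)))"
    using assms(1) by (simp add: lin_sum lin_smult)
  finally have "poly (T q) 0 = (\<Sum>m\<le>degree q. beta m q * fT T $ m)"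
    by (simp add: poly_sum fT_def coeff_beta ac_simps)
  also have "\<dots> = (\<Sum>m\<le>N. beta m q * fT T $ m)"
    by (rule sum.mono_neutral_left) (use assms(2) in \<open>auto simp: beta_0\<close>)
  finally show ?thesis .
qed

lemma expansion: assumes "T \<in> Sigma_psi psi"
  shows "T p = Op (fT T) p"
proof -
  have lin: "lin_op T" and comm: "\<And>a q. T (psi_shift psi a q) = psi_shift psi a (T q)"
    using assms by (auto simp: Sigma_psi_def)
  define D where "D = degree p"
  have "poly (T p) a = poly (Op (fT T) p) a" for a
  proof -
    have "poly (T p) a = poly (T (psi_shift psi a p)) 0"
      by (simp add: comm shift_eval)
    also have "\<dots> = (\<Sum>k\<le>D. a ^ k / psi_fact psi k * poly (T ((psi_deriv psi ^^ k) p)) 0)"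
      by (simp add: psi_shift_def lin_sum[OF lin] lin_smult[OF lin] poly_sum D_def)
    also have "\<dots> = (\<Sum>k\<le>D. a ^ k * psi k * (\<Sum>m\<le>D. beta (m+k) p * fT T $ m))"
    proof (rule sum.cong)
      fix k
      have "poly (T ((psi_deriv psi ^^ k) p)) 0 = (\<Sum>m\<le>D. beta m ((psi_deriv psi ^^ k) p) * fT T $ m)"
        by (rule tval[OF lin]) (simp add: degree_derivpow D_def)
      then show "a ^ k / psi_fact psi k * poly (T ((psi_deriv psi ^^ k) p)) 0 = a ^ k * psi k * (\<Sum>m\<le>D. beta (m+k) p * fT T $ m)"
        by (simp add: psi_fact_def)
    qed simp
    also have "\<dots> = (\<Sum>k\<le>D. coeff (Op (fT T) p) k * a ^ k)"
      by (rule sum.cong) (simp_all add: coeff_beta beta_Op[of p D] D_def sum_distrib_left ac_simps)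
    also have "\<dots> = poly (Op (fT T) p) a"
      by (rule poly_N[symmetric]) (simp add: degree_Op D_def)
    finally show ?thesis .
  qed
  then show ?thesis using poly_eq_poly_eq_iff by blast
qed

definition hh :: "'a fps \<Rightarrow> nat \<Rightarrow> 'a fps" where
  "hh s n = fps_deriv (fps_X * s) * inverse s ^ (n+1)"

lemma hh_eq: assumes s0: "s $ 0 \<noteq> 0" and n: "n \<ge> 1"
  shows "fps_const (of_nat n) * hh s n = fps_const (of_nat n) * inverse s ^ n - fps_X * fps_deriv (inverse s ^ n)"
proof -
  define t where "t = inverse s"
  have st: "s * t = 1" using s0 by (simp add: t_def inverse_mult_eq_1')
  have dt: "fps_deriv t = - fps_deriv s * t^2" using s0 by (simp add: t_def fps_inverse_deriv)
  obtain m where m: "n = Suc m" using n by (cases n) auto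
  have "fps_deriv (t ^ n) = fps_const (of_nat n) * fps_deriv t * t ^ m"
    by (simp only: fps_deriv_power m diff_Suc_1)
  also have "\<dots> = - (fps_const (of_nat n) * fps_deriv s * t ^ (n+1))"
    by (simp add: dt m power2_eq_square mult_ac del: of_nat_Suc fps_const_neg)
  finally have d: "fps_deriv (t ^ n) = - (fps_const (of_nat n) * fps_deriv s * t ^ (n+1))" .
  have tn: "s * t ^ (n+1) = t ^ n"
    by (simp only: power_Suc Suc_eq_plus1[symmetric] mult.assoc[symmetric] st mult_1_left)
  have "hh s n = (s + fps_X * fps_deriv s) * t ^ (n+1)"
    by (simp add: hh_def t_def)
  also have "\<dots> = t ^ n + fps_X * fps_deriv s * t ^ (n+1)"
    by (simp only: distrib_right tn)
  finally show ?thesis unfolding t_def[symmetric] d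
    by (simp add: algebra_simps)
qed

lemma hh_nth: assumes s0: "s $ 0 \<noteq> 0" and n: "n \<ge> 1"
  shows "hh s n $ j = (of_nat n - of_nat j) / of_nat n * (inverse s ^ n) $ j"
proof -
  have "(fps_const (of_nat n) * hh s n) $ j = (fps_const (of_nat n) * inverse s ^ n - fps_X * fps_deriv (inverse s ^ n)) $ j"
    by (simp only: hh_eq[OF assms])
  then have "of_nat n * hh s n $ j = of_nat n * (inverse s ^ n) $ j - of_nat j * (inverse s ^ n) $ j"
    by (cases j) (simp_all add: algebra_simps)
  moreover have "(of_nat n :: 'a) \<noteq> 0" using n by simp
  ultimately show ?thesis by (simp add: field_simps)
qed

lemma hh_0: assumes s0: "s $ 0 \<noteq> 0" shows "hh s 0 $ 0 = 1"
  using s0 by (simp add: hh_def fps_deriv_mult)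

lemma hh_shift: assumes s0: "s $ 0 \<noteq> 0" and n: "n \<ge> 1"
  shows "fps_X * (s * hh s n) = hh s (n-1) * fps_X"
proof -
  have st: "s * inverse s = 1" using s0 by (simp add: inverse_mult_eq_1')
  obtain m where m: "n = Suc m" using n by (cases n) auto
  have e: "s * inverse s ^ (n+1) = inverse s ^ n"
    by (simp only: power_Suc Suc_eq_plus1[symmetric] mult.assoc[symmetric] st mult_1_left)
  have "s * hh s n = fps_deriv (fps_X * s) * (s * inverse s ^ (n+1))"
    by (simp only: hh_def mult.left_commute)
  also have "\<dots> = hh s (n-1)" using n by (simp only: e hh_def) simp
  finally have "s * hh s n = hh s (n-1)" .
  then show ?thesis by (simp add: mult.commute)
qed

lemma xhat_smult: "psi_xhat psi (smult c p) = smult c (psi_xhat psi p)"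
  by (rule beta_ext) simp

lemma xhat_inv_smult: "psi_xhat_inv psi (smult c p) = smult c (psi_xhat_inv psi p)"
  by (rule beta_ext) simp

lemma deriv_smult: "psi_deriv psi (smult c p) = smult c (psi_deriv psi p)"
  by (rule beta_ext) simp

lemma deriv_diff: "psi_deriv psi (p - q) = psi_deriv psi p - psi_deriv psi q"
  by (rule beta_ext) simp

lemma deriv_monom: assumes "n \<ge> 1"
  shows "psi_deriv psi (monom (psi n) n) = monom (psi (n-1)) (n-1)"
  by (rule beta_ext) (use assms in \<open>auto simp: beta_monom\<close>)

lemma Op_inv_left: assumes "s $ 0 \<noteq> 0" shows "Op (inverse s) (Op s d) = d"
  using assms by (simp add: Op_hom inverse_mult_eq_1 Op_1)

lemma Op_inv_right: assumes "s $ 0 \<noteq> 0" shows "Op s (Op (inverse s) d) = d"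
  using assms by (simp add: Op_hom inverse_mult_eq_1' Op_1)

lemma uniq0: assumes s0: "s $ 0 \<noteq> 0" and Q: "psi_deriv psi (Op s d) = 0" and d0: "poly d 0 = 0"
  shows "d = 0"
proof (rule beta_ext)
  fix k
  define e where "e = Op s d"
  have eb: "beta (k+1) e = 0" for k
    using arg_cong[OF Q, of "beta k"] by (simp add: e_def)
  have dd: "d = Op (inverse s) e" using Op_inv_left[OF s0] by (simp add: e_def)
  show "beta k d = beta k 0"
  proof (cases k)
    case 0
    then show ?thesis using d0 psi0 by (simp add: beta_def poly_0_coeff_0)
  next
    case (Suc m)
    have "beta k (Op (inverse s) e) = (\<Sum>j\<le>degree e. inverse s $ j * beta (k+j) e)"
      by (rule beta_Op_raw)
    also have "\<dots> = 0"
      using eb[of "m + _"] by (intro sum.neutral) (auto simp: Suc)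
    finally show ?thesis using dd by simp
  qed
qed

lemma basic: assumes s0: "s $ 0 \<noteq> 0" and bs: "psi_basic_seq psi (psi_deriv psi \<circ> Op s) p"
  shows "smult (psi n) (p n) = Op (hh s n) (monom (psi n) n)"
proof (induction n)
  case 0
  have "p 0 = 1" using bs by (simp add: psi_basic_seq_def)
  moreover have "Op (hh s 0) (monom (psi 0) 0) = 1"
    by (rule beta_ext) (simp add: beta_Op_monom beta_one hh_0[OF s0])
  ultimately show ?case by (simp add: psi0)
next
  case (Suc m)
  define n where "n = Suc m"
  have n1: "n \<ge> 1" by (simp add: n_def)
  have Qp: "psi_deriv psi (Op s (p n)) = smult (psi_num psi n) (p m)"
    using bs by (simp add: psi_basic_seq_def n_def)
  have p0: "poly (p n) 0 = 0"
    using bs by (simp add: psi_basic_seq_def n_def)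
  define q where "q = Op (hh s n) (monom (psi n) n)"
  have Qq: "psi_deriv psi (Op s q) = Op (hh s m) (monom (psi m) m)"
  proof -
    have "psi_deriv psi (Op s q) = Op (fps_X * (s * hh s n)) (monom (psi n) n)"
      by (simp add: q_def Op_hom Op_X[symmetric])
    also have "\<dots> = Op (hh s m * fps_X) (monom (psi n) n)"
      using hh_shift[OF s0 n1] by (simp only: n_def diff_Suc_1)
    also have "\<dots> = Op (hh s m) (Op fps_X (monom (psi n) n))"
      by (rule Op_hom[symmetric])
    also have "\<dots> = Op (hh s m) (psi_deriv psi (monom (psi n) n))"
      by (simp only: Op_X)
    also have "\<dots> = Op (hh s m) (monom (psi m) m)"
      using deriv_monom[OF n1] by (simp add: n_def)
    finally show ?thesis .
  qed
  have q0: "poly q 0 = 0"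
  proof -
    have "poly q 0 = psi 0 * beta 0 q" by (simp add: poly_0_coeff_0 coeff_beta)
    also have "\<dots> = 0" using hh_nth[OF s0 n1, of n] by (simp add: q_def beta_Op_monom)
    finally show ?thesis .
  qed
  have "psi n * psi_num psi n = psi m"
    using psinz[of n] by (simp add: psi_num_def n_def)
  then have "psi_deriv psi (Op s (smult (psi n) (p n) - q)) = 0"
    using Suc.IH by (simp add: Op_diff Op_smult deriv_diff deriv_smult Qp Qq)
  moreover have "poly (smult (psi n) (p n) - q) 0 = 0" by (simp add: p0 q0)
  ultimately have "smult (psi n) (p n) - q = 0" by (rule uniq0[OF s0])
  then show ?case by (simp add: q_def n_def)
qed

lemma G1: assumes s0: "s $ 0 \<noteq> 0" and n1: "n \<ge> 1"
  shows "Op (hh s n) (monom (psi n) n) =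
    psi_xhat psi (smult (1 / of_nat n) (Op (inverse s ^ n) (monom (psi (n-1)) (n-1))))"
proof (rule beta_ext)
  fix k
  have nz: "(of_nat n :: 'a) \<noteq> 0" using n1 by simp
  show "beta k (Op (hh s n) (monom (psi n) n)) =
    beta k (psi_xhat psi (smult (1 / of_nat n) (Op (inverse s ^ n) (monom (psi (n-1)) (n-1)))))"
  proof (cases "k = 0")
    case True
    then show ?thesis using hh_nth[OF s0 n1, of n] by (simp add: beta_Op_monom)
  next
    case False
    show ?thesis
    proof (cases "k \<le> n")
      case True
      have e: "n - 1 - (k - 1) = n - k" using False True by arith
      have "beta k (Op (hh s n) (monom (psi n) n)) = hh s n $ (n - k)"
        using True by (simp add: beta_Op_monom)
      also have "\<dots> = of_nat k / of_nat n * (inverse s ^ n) $ (n - k)"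
        using True by (simp add: hh_nth[OF s0 n1] of_nat_diff)
      finally show ?thesis using True False e by (simp add: beta_Op_monom)
    next
      case False
      then have "\<not> (k - 1 \<le> n - 1)" using \<open>k \<noteq> 0\<close> n1 by arith
      then show ?thesis using False by (simp add: beta_Op_monom)
    qed
  qed
qed

lemma G2: assumes s0: "s $ 0 \<noteq> 0" and n1: "n \<ge> 1"
  shows "psi_xhat_inv psi (Op (hh s n) (monom (psi n) n)) =
    smult (1 / of_nat n) (Op (inverse s ^ n) (monom (psi (n-1)) (n-1)))"
proof (rule beta_ext)
  fix k
  have nz: "(of_nat (k+1) :: 'a) \<noteq> 0" by (simp del: of_nat_Suc)
  show "beta k (psi_xhat_inv psi (Op (hh s n) (monom (psi n) n))) =
    beta k (smult (1 / of_nat n) (Op (inverse s ^ n) (monom (psi (n-1)) (n-1))))"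
  proof (cases "k + 1 \<le> n")
    case True
    have e: "n - 1 - k = n - (k+1)" by arith
    have "beta (k+1) (Op (hh s n) (monom (psi n) n)) = hh s n $ (n - (k+1))"
      using True by (simp add: beta_Op_monom del: One_nat_def)
    also have "\<dots> = of_nat (k+1) / of_nat n * (inverse s ^ n) $ (n - (k+1))"
      using True by (simp add: hh_nth[OF s0 n1] of_nat_diff del: of_nat_Suc One_nat_def)
    finally have "beta (k+1) (Op (hh s n) (monom (psi n) n)) = of_nat (k+1) / of_nat n * (inverse s ^ n) $ (n - (k+1))" .
    then show ?thesis using True e nz by (simp add: beta_Op_monom del: of_nat_Suc One_nat_def)
  next
    case False
    then have "\<not> (k \<le> n - 1)" using n1 by arith
    then show ?thesis using False by (simp add: beta_Op_monom)
  qed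
qed

lemma Op_zero: "Op f 0 = 0"
  by (rule beta_ext) (simp add: beta_Op_raw)

lemma sigma_inv:
  assumes "T \<in> Sigma_psi psi" "bij T"
  shows "fT T $ 0 \<noteq> 0" "\<And>x. inv T x = Op (inverse (fT T)) x" "\<And>x. T x = Op (fT T) x"
proof -
  show T: "\<And>x. T x = Op (fT T) x" using expansion[OF assms(1)] .
  show nz: "fT T $ 0 \<noteq> 0"
  proof
    assume z: "fT T $ 0 = 0"
    have "Op (fT T) 1 = 0" by (rule beta_ext) (simp add: beta_Op_1 z)
    then have "T 1 = 0" using T[of 1] by simp
    moreover have "T 0 = 0" using T[of 0] by (simp add: Op_zero)
    ultimately have "(1::'a poly) = 0" using assms(2) by (metis bij_is_inj injD)
    then show False by simp
  qed
  fix x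
  have "inv T (T (Op (inverse (fT T)) x)) = Op (inverse (fT T)) x"
    using assms(2) by (simp add: bij_is_inj)
  moreover have "T (Op (inverse (fT T)) x) = x"
    using T[of "Op (inverse (fT T)) x"] Op_inv_right[OF nz] by simp
  ultimately show "inv T x = Op (inverse (fT T)) x" by simp
qed

lemma main_loc:
  assumes S: "S \<in> Sigma_psi psi" "bij S"
    and P: "P0 \<in> Sigma_psi psi" "bij P0"
    and bp: "psi_basic_seq psi (psi_deriv psi \<circ> S) p"
    and br: "psi_basic_seq psi (psi_deriv psi \<circ> P0) r"
    and n0: "n > 0"
  shows "p n = psi_xhat psi (((P0 \<circ> inv S) ^^ n) (psi_xhat_inv psi (r n)))"
proof -
  define s where "s = fT S"
  define pi where "pi = fT P0"
  note sS = sigma_inv[OF S, folded s_def]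
  note sP = sigma_inv[OF P, folded pi_def]
  have SS: "S = Op s" using sS(3) by blast
  have PP: "P0 = Op pi" using sP(3) by blast
  have n1: "n \<ge> 1" using n0 by simp
  have pow: "((P0 \<circ> inv S) ^^ k) x = Op ((pi * inverse s) ^ k) x" for k x
  proof (induction k)
    case 0 then show ?case by (simp add: Op_1)
  next
    case (Suc k)
    then show ?case by (simp add: sS(2) PP Op_hom mult_ac)
  qed
  have ps: "smult (psi n) (p n) = Op (hh s n) (monom (psi n) n)"
    by (rule basic[OF sS(1)]) (use bp in \<open>simp add: SS\<close>)
  have rs: "smult (psi n) (r n) = Op (hh pi n) (monom (psi n) n)"
    by (rule basic[OF sP(1)]) (use br in \<open>simp add: PP\<close>)
  define b where "b = monom (psi (n-1)) (n-1)"
  have rn: "r n = smult (1 / psi n) (Op (hh pi n) (monom (psi n) n))"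
    using arg_cong[OF rs, of "smult (1 / psi n)"] psinz[of n] by simp
  have "psi_xhat_inv psi (r n) = smult (1 / psi n) (smult (1 / of_nat n) (Op (inverse pi ^ n) b))"
    by (simp only: rn xhat_inv_smult G2[OF sP(1) n1] b_def)
  then have "((P0 \<circ> inv S) ^^ n) (psi_xhat_inv psi (r n)) =
      smult (1 / psi n) (smult (1 / of_nat n) (Op ((pi * inverse s) ^ n * inverse pi ^ n) b))"
    by (simp add: pow Op_smult Op_hom)
  also have "(pi * inverse s) ^ n * inverse pi ^ n = inverse s ^ n"
  proof -
    have "(pi * inverse s) ^ n * inverse pi ^ n = (pi * inverse pi) ^ n * inverse s ^ n"
      by (simp add: power_mult_distrib mult_ac)
    also have "\<dots> = inverse s ^ n" using sP(1) by (simp add: inverse_mult_eq_1')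
    finally show ?thesis .
  qed
  finally have "psi_xhat psi (((P0 \<circ> inv S) ^^ n) (psi_xhat_inv psi (r n))) =
      smult (1 / psi n) (Op (hh s n) (monom (psi n) n))"
    by (simp only: xhat_smult G1[OF sS(1) n1] b_def)
  also have "\<dots> = p n" using ps psinz[of n] by (simp flip: ps)
  finally show ?thesis by simp
qed

end

theorem mainTheorem12:
  fixes psi :: "nat \<Rightarrow> 'a::field_char_0"
    and S P0 :: "'a poly \<Rightarrow> 'a poly"
    and p r :: "nat \<Rightarrow> 'a poly"
  assumes "admissible_psi psi"
    and "S \<in> Sigma_psi psi" and "bij S"
    and "P0 \<in> Sigma_psi psi" and "bij P0"
    and "psi_delta psi (psi_deriv psi \<circ> S)"
    and "psi_delta psi (psi_deriv psi \<circ> P0)"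
    and "psi_basic_seq psi (psi_deriv psi \<circ> S) p"
    and "psi_basic_seq psi (psi_deriv psi \<circ> P0) r"
  shows "\<forall>n>0. p n = psi_xhat psi (((P0 \<circ> inv S) ^^ n) (psi_xhat_inv psi (r n)))"
proof (intro allI impI)
  fix n :: nat assume "n > 0"
  interpret psi_ctx psi by (rule psi_ctx.intro) (rule assms(1))
  show "p n = psi_xhat psi (((P0 \<circ> inv S) ^^ n) (psi_xhat_inv psi (r n)))"
    by (rule main_loc) (use assms \<open>n > 0\<close> in auto)
qed

end
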